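(* Let $n,r\ge 1$ be integers and $N=nr$. Let $\hat{\mathcal{S}}(n\times r)$ be the modular shuffle network defined below. Then $\hat{\mathcal{S}}(n\times r)$ is equivalent to the shuffle network $\mathcal{S}(N)$ in terms of connectivity: for every input group $ap'$ and every output group $bq'$ of $\hat{\mathcal{S}}(n\times r)$ ($a,b\in\{0,\dots,n-1\}$, $p',q'\in\{0,\dots,r-1\}$) there is exactly one fiber path $\hat f(ap'bq',bq'ap')$ joining them, it runs from input $ap'bq'$ to output $bq'ap'$, and, writing $p=ar+p'$ and $q=br+q'$, the correspondence $\hat f(ap'bq',bq'ap')\leftrightarrow f(pq,qp)$ is a bijection between the fibers of $\hat{\mathcal{S}}(n\times r)$ and those of $\mathcal{S}(N)$ preserving which input group and output group each fiber joins.
   Context: For an integer $M\ge1$, the $M^2\times M^2$ shuffle network $\mathcal{S}(M)$ has $M$ input groups and $M$ output groups, each of $M$ ports; input $pq$ denotes the $q$th input of the $p$th input group and output $qp$ denotes the $p$th output of the $q$th output group ($p,q\in\{0,\dots,M-1\}$), and for all $p,q$ input $pq$ is connected by a single fiber $f(pq,qp)$ to output $qp$. Thus exactly one fiber joins each input group to each output group, and the output address is the input address with its two sub-addresses exchanged. The modular shuffle network $\hat{\mathcal{S}}(n\times r)$ is built as follows. It has $N=nr$ input groups labelled $ap'$ and $N$ output groups labelled $bq'$ ($a,b\in\{0,\dots,n-1\}$, $p',q'\in\{0,\dots,r-1\}$). Input group $ap'$ has $N$ inputs split into $n$ subgroups $ap'b$ of $r$ inputs each, the $q'$th input of subgroup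 $ap'b$ being labelled $ap'bq'$; output group $bq'$ has $N$ outputs split into $n$ subgroups $bq'a$ of $r$ outputs each, the $p'$th output of subgroup $bq'a$ being labelled $bq'ap'$. There are $n^2$ copies $\mathcal{S}_{ab}(r)$ ($a,b\in\{0,\dots,n-1\}$) of the $r^2\times r^2$ shuffle network $\mathcal{S}(r)$. Input $ap'bq'$ of $\hat{\mathcal{S}}(n\times r)$ is linked to input $p'q'$ of $\mathcal{S}_{ab}(r)$, and output $bq'ap'$ of $\hat{\mathcal{S}}(n\times r)$ is linked to output $q'p'$ of $\mathcal{S}_{ab}(r)$. *)

theory Defs
  imports Main
begin

(* Nodes of the modular shuffle network \<hat>S(n x r):
   HIn a p' b q'   = input  a p' b q' of \<hat>S (q'-th input of subgroup a p' b of input group a p')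
   HOut b q' a p'  = output b q' a p' of \<hat>S (p'-th output of subgroup b q' a of output group b q')
   SIn a b p' q'   = input  p' q' of the copy S_ab(r)
   SOut a b q' p'  = output q' p' of the copy S_ab(r) *)
datatype node = HIn nat nat nat nat | HOut nat nat nat nat
              | SIn nat nat nat nat | SOut nat nat nat nat

definition hat_edge :: "nat \<Rightarrow> nat \<Rightarrow> node \<Rightarrow> node \<Rightarrow> bool" where
  "hat_edge n r u v \<longleftrightarrow>
     (\<exists>a b p q. a < n \<and> b < n \<and> p < r \<and> q < r \<and>
        ((u = HIn a p b q \<and> v = SIn a b p q) \<or>
         (u = SIn a b p q \<and> v = SOut a b q p) \<or>
         (u = SOut a b q p \<and> v = HOut b q a p)))"

fun is_hin :: "node \<Rightarrow> bool" where
  "is_hin (HIn _ _ _ _) = True" | "is_hin _ = False"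

fun is_hout :: "node \<Rightarrow> bool" where
  "is_hout (HOut _ _ _ _) = True" | "is_hout _ = False"

definition hat_path :: "nat \<Rightarrow> nat \<Rightarrow> node list \<Rightarrow> bool" where
  "hat_path n r xs \<longleftrightarrow> xs \<noteq> [] \<and> is_hin (hd xs) \<and> is_hout (last xs) \<and>
     (\<forall>i. Suc i < length xs \<longrightarrow> hat_edge n r (xs ! i) (xs ! Suc i))"

fun hin_grp :: "node \<Rightarrow> (nat \<times> nat) option" where
  "hin_grp (HIn a p b q) = Some (a, p)" | "hin_grp _ = None"

fun hout_grp :: "node \<Rightarrow> (nat \<times> nat) option" where
  "hout_grp (HOut b q a p) = Some (b, q)" | "hout_grp _ = None"

(* Fibers of the shuffle network S(M): f(pq,qp) represented as ((p,q),(q,p)),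
   i.e. (input address, output address).  Input group = fst (fst f), output group = fst (snd f). *)
definition shuffle_fibers :: "nat \<Rightarrow> ((nat \<times> nat) \<times> (nat \<times> nat)) set" where
  "shuffle_fibers M = {((p, q), (q, p)) | p q. p < M \<and> q < M}"

fun corr_ends :: "nat \<Rightarrow> node \<Rightarrow> node \<Rightarrow> (nat \<times> nat) \<times> (nat \<times> nat)" where
  "corr_ends r (HIn a p' b q') (HOut b2 q2 a2 p2) = ((a*r+p', b*r+q'), (b2*r+q2, a2*r+p2))"
| "corr_ends r _ _ = undefined"

definition corr :: "nat \<Rightarrow> node list \<Rightarrow> (nat \<times> nat) \<times> (nat \<times> nat)" where
  "corr r xs = corr_ends r (hd xs) (last xs)"

end

theory Submission
  imports Defs
begin

lemma e_hin: "hat_edge n r (HIn a p b q) v \<longleftrightarrow> a<n \<and> b<n \<and> p<r \<and> q<r \<and> v = SIn a b p q"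
  unfolding hat_edge_def by auto
lemma e_sin: "hat_edge n r (SIn a b p q) v \<longleftrightarrow> a<n \<and> b<n \<and> p<r \<and> q<r \<and> v = SOut a b q p"
  unfolding hat_edge_def by auto
lemma e_sout: "hat_edge n r (SOut a b q p) v \<longleftrightarrow> a<n \<and> b<n \<and> p<r \<and> q<r \<and> v = HOut b q a p"
  unfolding hat_edge_def by auto
lemma e_hout: "\<not> hat_edge n r (HOut a b q p) v"
  unfolding hat_edge_def by auto

lemma hin_cases: "is_hin x \<Longrightarrow> \<exists>a p b q. x = HIn a p b q"
  by (cases x) auto

lemma char: "hat_path n r xs \<longleftrightarrow> (\<exists>a b p q. a<n \<and> b<n \<and> p<r \<and> q<r \<and>
   xs = [HIn a p b q, SIn a b p q, SOut a b q p, HOut b q a p])"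
proof
  assume h: "hat_path n r xs"
  then have ne: "xs \<noteq> []" and hi: "is_hin (hd xs)" and ho: "is_hout (last xs)"
    and E: "\<And>i. Suc i < length xs \<Longrightarrow> hat_edge n r (xs ! i) (xs ! Suc i)"
    unfolding hat_path_def by auto
  obtain x0 t where xs: "xs = x0 # t" using ne by (cases xs) auto
  obtain a p b q where x0: "x0 = HIn a p b q" using hin_cases[of x0] hi xs by auto
  obtain x1 t1 where t: "t = x1 # t1" using ho xs x0 by (cases t) auto
  have e0: "hat_edge n r x0 x1" using E[of 0] xs t by simp
  hence b1: "a<n \<and> b<n \<and> p<r \<and> q<r" and x1: "x1 = SIn a b p q" using x0 e_hin by auto
  obtain x2 t2 where t1: "t1 = x2 # t2" using ho xs t x1 by (cases t1) auto
  have "hat_edge n r x1 x2" using E[of 1] xs t t1 by simp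
  hence x2: "x2 = SOut a b q p" using x1 e_sin by auto
  obtain x3 t3 where t2: "t2 = x3 # t3" using ho xs t t1 x2 by (cases t2) auto
  have "hat_edge n r x2 x3" using E[of 2] xs t t1 t2 by (simp add: numeral_2_eq_2)
  hence x3: "x3 = HOut b q a p" using x2 e_sout by auto
  have t3: "t3 = []"
  proof (rule ccontr)
    assume "t3 \<noteq> []"
    then obtain y t4 where "t3 = y # t4" by (cases t3) auto
    hence "hat_edge n r x3 y" using E[of 3] xs t t1 t2 by (simp add: numeral_3_eq_3)
    thus False using x3 e_hout by simp
  qed
  show "\<exists>a b p q. a<n \<and> b<n \<and> p<r \<and> q<r \<and>
   xs = [HIn a p b q, SIn a b p q, SOut a b q p, HOut b q a p]"
    using b1 xs x0 t x1 t1 x2 t2 x3 t3 by blast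
next
  assume "\<exists>a b p q. a<n \<and> b<n \<and> p<r \<and> q<r \<and>
   xs = [HIn a p b q, SIn a b p q, SOut a b q p, HOut b q a p]"
  then obtain a b p q where b: "a<n" "b<n" "p<r" "q<r" and
    xs: "xs = [HIn a p b q, SIn a b p q, SOut a b q p, HOut b q a p]" by blast
  have "\<forall>i. Suc i < 4 \<longrightarrow> hat_edge n r (xs ! i) (xs ! Suc i)"
  proof (intro allI impI)
    fix i :: nat assume "Suc i < 4"
    hence "i = 0 \<or> i = 1 \<or> i = 2" by auto
    thus "hat_edge n r (xs ! i) (xs ! Suc i)" using b
      by (auto simp: xs e_hin e_sin e_sout numeral_2_eq_2)
  qed
  thus "hat_path n r xs" unfolding hat_path_def by (simp add: xs)
qed

lemma divmod_inj: "(p::nat) < r \<Longrightarrow> p' < r \<Longrightarrow> a*r+p = a'*r+p' \<Longrightarrow> a = a' \<and> p = p'"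
proof -
  assume h: "p < r" "p' < r" "a*r+p = a'*r+p'"
  have 1: "(a*r+p) div r = a" "(a*r+p) mod r = p" using h(1) by auto
  have 2: "(a'*r+p') div r = a'" "(a'*r+p') mod r = p'" using h(2) by auto
  show ?thesis using 1 2 h(3) by simp
qed

lemma lt_bound: "(a::nat) < n \<Longrightarrow> p < r \<Longrightarrow> a*r+p < n*r"
proof -
  assume h: "a < n" "p < r"
  have "a*r+p < Suc a * r" using h by simp
  also have "\<dots> \<le> n*r" using h by (intro mult_le_mono1) simp
  finally show ?thesis .
qed

theorem lemma2:
  fixes n r :: nat
  assumes "n \<ge> 1" and "r \<ge> 1"
  shows "(\<forall>a<n. \<forall>b<n. \<forall>p'<r. \<forall>q'<r.
           {xs. hat_path n r xs \<and> hin_grp (hd xs) = Some (a, p') \<and> hout_grp (last xs) = Some (b, q')}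
             = {[HIn a p' b q', SIn a b p' q', SOut a b q' p', HOut b q' a p']})
       \<and> bij_betw (corr r) {xs. hat_path n r xs} (shuffle_fibers (n * r))
       \<and> (\<forall>xs. hat_path n r xs \<longrightarrow>
            (\<forall>a p'. hin_grp (hd xs) = Some (a, p') \<longrightarrow> fst (fst (corr r xs)) = a * r + p')
          \<and> (\<forall>b q'. hout_grp (last xs) = Some (b, q') \<longrightarrow> fst (snd (corr r xs)) = b * r + q'))"
proof (intro conjI)
  show "\<forall>a<n. \<forall>b<n. \<forall>p'<r. \<forall>q'<r.
           {xs. hat_path n r xs \<and> hin_grp (hd xs) = Some (a, p') \<and> hout_grp (last xs) = Some (b, q')}
             = {[HIn a p' b q', SIn a b p' q', SOut a b q' p', HOut b q' a p']}"
    by (auto simp: char)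
  show "\<forall>xs. hat_path n r xs \<longrightarrow>
            (\<forall>a p'. hin_grp (hd xs) = Some (a, p') \<longrightarrow> fst (fst (corr r xs)) = a * r + p')
          \<and> (\<forall>b q'. hout_grp (last xs) = Some (b, q') \<longrightarrow> fst (snd (corr r xs)) = b * r + q')"
    by (auto simp: char corr_def)
  show "bij_betw (corr r) {xs. hat_path n r xs} (shuffle_fibers (n * r))"
    unfolding bij_betw_def
  proof (intro conjI)
    show "inj_on (corr r) {xs. hat_path n r xs}"
    proof (rule inj_onI)
      fix x y assume "x \<in> {xs. hat_path n r xs}" "y \<in> {xs. hat_path n r xs}" "corr r x = corr r y"
      then obtain a b p q a' b' p' q' where
        bx: "p<r" "q<r" "x = [HIn a p b q, SIn a b p q, SOut a b q p, HOut b q a p]" and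
        yy: "p'<r" "q'<r" "y = [HIn a' p' b' q', SIn a' b' p' q', SOut a' b' q' p', HOut b' q' a' p']" and
        c: "corr r x = corr r y"
        unfolding mem_Collect_eq char by blast
      have "a*r+p = a'*r+p'" "b*r+q = b'*r+q'" using c bx(3) yy(3) by (simp_all add: corr_def)
      hence "a = a' \<and> p = p'" "b = b' \<and> q = q'" using divmod_inj bx yy by blast+
      then show "x = y" using bx(3) yy(3) by simp
    qed
    show "corr r ` {xs. hat_path n r xs} = shuffle_fibers (n * r)"
    proof
      show "corr r ` {xs. hat_path n r xs} \<subseteq> shuffle_fibers (n * r)"
      proof
        fix z assume "z \<in> corr r ` {xs. hat_path n r xs}"
        then obtain a b p q where b: "a<n" "b<n" "p<r" "q<r" and
          z: "z = ((a*r+p, b*r+q), (b*r+q, a*r+p))" by (auto simp: char corr_def)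
        have "a*r+p < n*r" using b
          by (simp add: lt_bound)
        moreover have "b*r+q < n*r" using b
          by (simp add: lt_bound)
        ultimately show "z \<in> shuffle_fibers (n * r)" unfolding shuffle_fibers_def z by blast
      qed
      show "shuffle_fibers (n * r) \<subseteq> corr r ` {xs. hat_path n r xs}"
      proof
        fix z assume "z \<in> shuffle_fibers (n * r)"
        then obtain P Q where z: "z = ((P,Q),(Q,P))" and PQ: "P < n*r" "Q < n*r"
          unfolding shuffle_fibers_def by blast
        define a where "a = P div r"
        define p where "p = P mod r"
        define b where "b = Q div r"
        define q where "q = Q mod r"
        have bd: "a<n" "b<n" "p<r" "q<r" using PQ assms
          by (auto simp: a_def p_def b_def q_def less_mult_imp_div_less)
        have eqs: "P = a*r+p" "Q = b*r+q" by (simp_all add: a_def p_def b_def q_def)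
        let ?xs = "[HIn a p b q, SIn a b p q, SOut a b q p, HOut b q a p]"
        have "hat_path n r ?xs" using bd char by blast
        moreover have "corr r ?xs = z" by (simp add: corr_def z eqs)
        ultimately show "z \<in> corr r ` {xs. hat_path n r xs}" by (intro image_eqI[of z _ ?xs]) simp_all
      qed
    qed
  qed
qed

end
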